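(* Consider a one-red TAP instance with $n$ blue features, and let $\mathrm{OPT}_{SC}$ be the smallest number of red features appearing in a set of exemplars in which all blue features appear. Let $K=\lceil \tfrac12(n-\mathrm{OPT}_{SC})\rceil$. Then GREEDY covers at least $2K$ blue features in its first $K$ moves (iterations).
   Context: Target Approximation Problem (TAP): the input is a groundset $U$ of features, a target $T\subseteq U$, and a collection $S$ of exemplars, each a subset of $U$. Features in $U\cap T$ are blue, features in $U\setminus T$ are red. A feature appears in $S'\subseteq S$ if it lies in $\bigcup_{E\in S'}E$. It is assumed that every feature appears in at least one exemplar and that $T$ and all exemplars are nonempty. An instance is one-red if every exemplar contains exactly one red feature. A red feature $r$ covers a blue feature $b$ if some exemplar contains both. GREEDY: until every blue feature is covered, repeatedly choose the red feature that covers the largest number of not-yet-covered blue features (ties broken arbitrarily); each such choice is one move, and the blue features covered by that move are the previously uncovered blue features covered by the chosen red feature. *)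

theory Defs
  imports Complex_Main
begin

definition tap_instance :: "'a set \<Rightarrow> 'a set \<Rightarrow> 'a set set \<Rightarrow> bool" where
  "tap_instance U T S \<longleftrightarrow> finite U \<and> T \<subseteq> U \<and> T \<noteq> {} \<and>
     (\<forall>E\<in>S. E \<subseteq> U \<and> E \<noteq> {}) \<and> \<Union>S = U"

text \<open>Every exemplar contains exactly one red feature.\<close>
definition one_red :: "'a set \<Rightarrow> 'a set \<Rightarrow> 'a set set \<Rightarrow> bool" where
  "one_red U T S \<longleftrightarrow> (\<forall>E\<in>S. card (E - T) = 1)"

definition opt_sc :: "'a set \<Rightarrow> 'a set \<Rightarrow> 'a set set \<Rightarrow> nat" where
  "opt_sc U T S = Min {card (\<Union>S' - T) | S'. S' \<subseteq> S \<and> T \<subseteq> \<Union>S'}"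

definition covers :: "'a set \<Rightarrow> 'a set set \<Rightarrow> 'a \<Rightarrow> 'a set" where
  "covers T S r = {b \<in> T. \<exists>E\<in>S. r \<in> E \<and> b \<in> E}"

definition covered :: "'a set \<Rightarrow> 'a set set \<Rightarrow> 'a list \<Rightarrow> 'a set" where
  "covered T S rs = (\<Union>r\<in>set rs. covers T S r)"

definition greedy_run :: "'a set \<Rightarrow> 'a set \<Rightarrow> 'a set set \<Rightarrow> 'a list \<Rightarrow> bool" where
  "greedy_run U T S rs \<longleftrightarrow>
     (\<forall>i<length rs.
        rs ! i \<in> U - T \<and>
        \<not> T \<subseteq> covered T S (take i rs) \<and>
        (\<forall>r\<in>U - T. card (covers T S r - covered T S (take i rs))
                    \<le> card (covers T S (rs ! i) - covered T S (take i rs))))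
     \<and> T \<subseteq> covered T S rs"

end

theory Submission
  imports Defs
begin

lemma covers_sub: "covers T S r \<subseteq> T" unfolding covers_def by auto
lemma covered_sub: "covered T S rs \<subseteq> T" unfolding covered_def covers_def by auto

lemma red_exists:
  assumes "one_red U T S" "E \<in> S"
  obtains r where "r \<in> E" "r \<notin> T"
proof -
  have "card (E - T) = 1" using assms unfolding one_red_def by auto
  then have "E - T \<noteq> {}" by (metis card.empty zero_neq_one)
  then show ?thesis using that by auto
qed

lemma opt_sc_attained:
  assumes "tap_instance U T S"
  shows "\<exists>S'. S' \<subseteq> S \<and> T \<subseteq> \<Union>S' \<and> opt_sc U T S = card (\<Union>S' - T)"
proof -
  let ?M = "{card (\<Union>S' - T) | S'. S' \<subseteq> S \<and> T \<subseteq> \<Union>S'}"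
  have fin: "finite U" and UU: "\<Union>S = U" "T \<subseteq> U" using assms unfolding tap_instance_def by auto
  have "?M \<subseteq> {..card U}"
  proof
    fix x assume "x \<in> ?M"
    then obtain S' where "S' \<subseteq> S" "x = card (\<Union>S' - T)" by auto
    then have "\<Union>S' - T \<subseteq> U" using UU by auto
    then show "x \<in> {..card U}" using card_mono[OF fin] \<open>x = _\<close> by auto
  qed
  then have "finite ?M" using finite_subset by blast
  moreover have "?M \<noteq> {}" using UU by auto
  ultimately have "opt_sc U T S \<in> ?M" unfolding opt_sc_def using Min_in by blast
  then show ?thesis by auto
qed

lemma opt_pos:
  assumes "tap_instance U T S" "one_red U T S"
  shows "1 \<le> opt_sc U T S"
proof -
  obtain S' where S': "S' \<subseteq> S" "T \<subseteq> \<Union>S'" "opt_sc U T S = card (\<Union>S' - T)"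
    using opt_sc_attained[OF assms(1)] by blast
  have fin: "finite U" and UU: "\<Union>S = U" "T \<noteq> {}" using assms unfolding tap_instance_def by auto
  obtain b where "b \<in> T" using UU by auto
  then obtain E where E: "E \<in> S'" "b \<in> E" using S' by auto
  obtain r where "r \<in> E" "r \<notin> T" using red_exists[OF assms(2)] E S' by blast
  then have "r \<in> \<Union>S' - T" using E by auto
  moreover have "finite (\<Union>S' - T)" using S' UU fin
    by (metis Diff_subset Union_mono finite_subset subset_trans)
  ultimately show ?thesis using S'(3)
    by (metis One_nat_def Suc_leI card_gt_0_iff empty_iff)
qed

lemma gain_pos:
  assumes "tap_instance U T S" "one_red U T S" "\<not> T \<subseteq> C"
    and H: "\<forall>r\<in>U - T. card (covers T S r - C) \<le> g"
  shows "1 \<le> g"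
proof -
  have fin: "finite U" and UU: "\<Union>S = U" "T \<subseteq> U" using assms unfolding tap_instance_def by auto
  obtain b where b: "b \<in> T" "b \<notin> C" using assms(3) by auto
  then obtain E where E: "E \<in> S" "b \<in> E" using UU by auto
  obtain r where r: "r \<in> E" "r \<notin> T" using red_exists[OF assms(2) E(1)] by blast
  have rU: "r \<in> U" using r E UU by auto
  have "b \<in> covers T S r - C" using b E r unfolding covers_def by auto
  moreover have "finite (covers T S r - C)"
    using covers_sub UU fin by (metis finite_Diff finite_subset)
  ultimately have "1 \<le> card (covers T S r - C)"
    by (metis One_nat_def Suc_leI card_gt_0_iff empty_iff)
  then show ?thesis using H rU r by force
qed

lemma gain_small:
  assumes "tap_instance U T S" "one_red U T S"
    and H: "\<forall>r\<in>U - T. card (covers T S r - C) \<le> 1"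
  shows "card (T - C) \<le> opt_sc U T S"
proof -
  obtain S' where S': "S' \<subseteq> S" "T \<subseteq> \<Union>S'" "opt_sc U T S = card (\<Union>S' - T)"
    using opt_sc_attained[OF assms(1)] by blast
  have fin: "finite U" and UU: "\<Union>S = U" "T \<subseteq> U" using assms unfolding tap_instance_def by auto
  let ?R = "\<Union>S' - T"
  have finR: "finite ?R" using S' UU fin
    by (metis Diff_subset Union_mono finite_subset subset_trans)
  have sub: "T - C \<subseteq> (\<Union>r\<in>?R. covers T S r - C)"
  proof
    fix b assume b: "b \<in> T - C"
    then obtain E where E: "E \<in> S'" "b \<in> E" using S' by auto
    obtain r where r: "r \<in> E" "r \<notin> T" using red_exists[OF assms(2)] E S' by blast
    have "b \<in> covers T S r - C" using b E r S' unfolding covers_def by auto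
    moreover have "r \<in> ?R" using r E by auto
    ultimately show "b \<in> (\<Union>r\<in>?R. covers T S r - C)" by auto
  qed
  have "card (T - C) \<le> card (\<Union>r\<in>?R. covers T S r - C)"
    apply (rule card_mono[OF _ sub])
    using finR covers_sub UU fin by (meson finite_Diff finite_UN_I finite_subset)
  also have "\<dots> \<le> (\<Sum>r\<in>?R. card (covers T S r - C))" by (rule card_UN_le[OF finR])
  also have "\<dots> \<le> (\<Sum>r\<in>?R. 1)"
    apply (rule sum_mono) using H S' UU by auto
  also have "\<dots> = opt_sc U T S" using S'(3) by simp
  finally show ?thesis .
qed

lemma K_bound:
  fixes n d :: nat
  shows "2 * nat \<lceil>(real n - real d) / 2\<rceil> \<le> n - d + 1"
proof -
  define c where "c = \<lceil>(real n - real d) / 2\<rceil>"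
  have "real_of_int c < (real n - real d) / 2 + 1"
    unfolding c_def by linarith
  then have "real_of_int (2*c) < real_of_int (int n - int d + 2)" by (simp add: field_simps)
  then have "2 * c < int n - int d + 2" by (simp only: of_int_less_iff)
  then show ?thesis unfolding c_def[symmetric] by (cases "c \<le> 0") auto
qed

lemma card_Un_Diff_eq:
  assumes "finite A" "finite B"
  shows "card (A \<union> B) = card A + card (B - A)"
proof -
  have "A \<union> B = A \<union> (B - A)" by auto
  then show ?thesis using card_Un_disjoint[of A "B - A"] assms by auto
qed

theorem lemma14:
  fixes U T :: "'a set" and S :: "'a set set" and rs :: "'a list" and n K :: nat
  assumes "tap_instance U T S"
    and "one_red U T S"
    and "n = card T"
    and "K = nat \<lceil>(real n - real (opt_sc U T S)) / 2\<rceil>"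
    and "greedy_run U T S rs"
  shows "2 * K \<le> card (covered T S (take K rs))"
proof -
  have finU: "finite U" and TU: "T \<subseteq> U" using assms(1) unfolding tap_instance_def by auto
  have finT: "finite T" using finU TU finite_subset by blast
  have finC: "\<And>xs. finite (covered T S xs)" using covered_sub finT finite_subset by metis
  have finG: "\<And>r xs. finite (covers T S r - covered T S xs)" using covers_sub finT finite_subset
    by (metis finite_Diff)
  have Kb: "2 * K \<le> n - opt_sc U T S + 1" using K_bound assms(4) by simp
  have op: "1 \<le> opt_sc U T S" using opt_pos assms(1,2) by blast
  have Kn: "2 * K \<le> n" proof (cases "opt_sc U T S \<le> n")
    case True then show ?thesis using Kb op by linarith
  next
    case False then have "n - opt_sc U T S = 0" by simp
    then have "K = 0" using Kb by simp
    then show ?thesis by simp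
  qed
  have gr: "\<And>i. i < length rs \<Longrightarrow> rs ! i \<in> U - T \<and>
        \<not> T \<subseteq> covered T S (take i rs) \<and>
        (\<forall>r\<in>U - T. card (covers T S r - covered T S (take i rs))
                    \<le> card (covers T S (rs ! i) - covered T S (take i rs)))"
    and full: "T \<subseteq> covered T S rs" using assms(5) unfolding greedy_run_def by auto
  have inv: "min (2*i) (2*K) \<le> card (covered T S (take i rs))" for i
  proof (induction i)
    case 0 then show ?case by simp
  next
    case (Suc i)
    show ?case
    proof (cases "i < length rs")
      case False
      then have "take (Suc i) rs = rs" by simp
      moreover have "covered T S rs = T" by (rule subset_antisym[OF covered_sub full])
      ultimately have "covered T S (take (Suc i) rs) = T" by simp
      then show ?thesis using Kn assms(3) by simp
    next
      case True
      let ?C = "covered T S (take i rs)"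
      let ?g = "card (covers T S (rs ! i) - ?C)"
      have "take (Suc i) rs = take i rs @ [rs ! i]" using True by (simp add: take_Suc_conv_app_nth)
      then have "covered T S (take (Suc i) rs) = ?C \<union> covers T S (rs ! i)"
        unfolding covered_def by auto
      then have eq: "card (covered T S (take (Suc i) rs)) = card ?C + ?g"
        using card_Un_Diff_eq[OF finC, of "covers T S (rs ! i)" "take i rs"]
          finite_subset[OF covers_sub finT] by simp
      have nc: "\<not> T \<subseteq> ?C" using gr[OF True] by simp
      have mx: "\<forall>r\<in>U - T. card (covers T S r - ?C) \<le> ?g" using gr[OF True] by simp
      have g1: "1 \<le> ?g" by (rule gain_pos[OF assms(1,2) nc mx])
      show ?thesis
      proof (cases "?g \<le> 1")
        case True
        have "\<forall>r\<in>U - T. card (covers T S r - ?C) \<le> 1"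
        proof
          fix r assume "r \<in> U - T"
          then have "card (covers T S r - ?C) \<le> ?g" using mx by blast
          then show "card (covers T S r - ?C) \<le> 1" using True by linarith
        qed
        then have "card (T - ?C) \<le> opt_sc U T S" using gain_small[OF assms(1,2)] by blast
        moreover have "card (T - ?C) = n - card ?C" using assms(3)
          card_Diff_subset[OF finC covered_sub] by simp
        moreover have "card ?C \<le> n" using assms(3) card_mono[OF finT covered_sub] by simp
        ultimately have "n - opt_sc U T S \<le> card ?C" by linarith
        then have "2 * K \<le> card (covered T S (take (Suc i) rs))" using eq g1 Kb by linarith
        then show ?thesis by (simp add: min_le_iff_disj)
      next
        case False
        then have "2 \<le> ?g" by simp
        then show ?thesis using eq Suc.IH by (auto simp: min_def split: if_splits)
      qed
    qed
  qed
  show ?thesis using inv[of K] by simp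
qed

end
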